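(* Let $\{R_i\}_{i}$ be an arbitrary family of avoidance rings and $R=\prod_i R_i$. Then $R$ is an avoidance ring if and only if $R/I$ is an avoidance ring, where $I=\bigoplus_i R_i\subseteq R$ is the ideal of elements with only finitely many nonzero coordinates.
   Context: All rings are commutative with $1\neq 0$. An ideal $I$ of a ring $R$ has avoidance if whenever $I_1,\ldots,I_n$ are finitely many ideals of $R$ with $I\subseteq\bigcup_{k=1}^n I_k$, then $I\subseteq I_k$ for some $k$. A ring is an avoidance ring if every ideal of it has avoidance. *)

theory Defs
  imports "HOL-Algebra.QuotRing"
begin

definition has_avoidance :: "('a, 'b) ring_scheme \<Rightarrow> 'a set \<Rightarrow> bool" where
  "has_avoidance R J \<longleftrightarrow>
     (\<forall>S. finite S \<longrightarrow> (\<forall>K\<in>S. ideal K R) \<longrightarrow> J \<subseteq> \<Union>S \<longrightarrow> (\<exists>K\<in>S. J \<subseteq> K))"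

definition avoidance_ring :: "('a, 'b) ring_scheme \<Rightarrow> bool" where
  "avoidance_ring R \<longleftrightarrow> (\<forall>J. ideal J R \<longrightarrow> has_avoidance R J)"

definition prod_ring :: "'i set \<Rightarrow> ('i \<Rightarrow> ('a, 'b) ring_scheme) \<Rightarrow> ('i \<Rightarrow> 'a) ring" where
  "prod_ring Idx R =
     \<lparr> carrier = (\<Pi>\<^sub>E i\<in>Idx. carrier (R i)),
       mult = (\<lambda>f g. restrict (\<lambda>i. f i \<otimes>\<^bsub>R i\<^esub> g i) Idx),
       one = restrict (\<lambda>i. \<one>\<^bsub>R i\<^esub>) Idx,
       zero = restrict (\<lambda>i. \<zero>\<^bsub>R i\<^esub>) Idx,
       add = (\<lambda>f g. restrict (\<lambda>i. f i \<oplus>\<^bsub>R i\<^esub> g i) Idx) \<rparr>"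

definition direct_sum_ideal :: "'i set \<Rightarrow> ('i \<Rightarrow> ('a, 'b) ring_scheme) \<Rightarrow> ('i \<Rightarrow> 'a) set" where
  "direct_sum_ideal Idx R =
     {f \<in> carrier (prod_ring Idx R). finite {i \<in> Idx. f i \<noteq> \<zero>\<^bsub>R i\<^esub>}}"

end

theory Submission
  imports Defs
begin

lemma prod_ring_simps:
  "carrier (prod_ring Idx R) = (\<Pi>\<^sub>E i\<in>Idx. carrier (R i))"
  "x \<otimes>\<^bsub>prod_ring Idx R\<^esub> y = restrict (\<lambda>i. x i \<otimes>\<^bsub>R i\<^esub> y i) Idx"
  "x \<oplus>\<^bsub>prod_ring Idx R\<^esub> y = restrict (\<lambda>i. x i \<oplus>\<^bsub>R i\<^esub> y i) Idx"
  "\<one>\<^bsub>prod_ring Idx R\<^esub> = restrict (\<lambda>i. \<one>\<^bsub>R i\<^esub>) Idx"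
  "\<zero>\<^bsub>prod_ring Idx R\<^esub> = restrict (\<lambda>i. \<zero>\<^bsub>R i\<^esub>) Idx"
  by (simp_all add: prod_ring_def)

lemma prod_cring:
  assumes cr: "\<And>i. i \<in> Idx \<Longrightarrow> cring (R i)"
  shows "cring (prod_ring Idx R)"
proof -
  have rR: "\<And>i. i \<in> Idx \<Longrightarrow> ring (R i)" using cr cring.axioms(1) by blast
  have crR: "\<And>i. i \<in> Idx \<Longrightarrow> cring (R i)" by (rule cr)
  show ?thesis
  proof (rule cringI)
    show "abelian_group (prod_ring Idx R)"
    proof (rule abelian_groupI)
      fix x y z
      assume x: "x \<in> carrier (prod_ring Idx R)" and y: "y \<in> carrier (prod_ring Idx R)"
        and z: "z \<in> carrier (prod_ring Idx R)"
      show "(x \<oplus>\<^bsub>prod_ring Idx R\<^esub> y) \<oplus>\<^bsub>prod_ring Idx R\<^esub> z = x \<oplus>\<^bsub>prod_ring Idx R\<^esub> (y \<oplus>\<^bsub>prod_ring Idx R\<^esub> z)"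
        using x y z by (auto simp: prod_ring_simps fun_eq_iff PiE_iff ring.ring_simprules[OF rR])
    next
      fix x y
      assume x: "x \<in> carrier (prod_ring Idx R)" and y: "y \<in> carrier (prod_ring Idx R)"
      show "x \<oplus>\<^bsub>prod_ring Idx R\<^esub> y \<in> carrier (prod_ring Idx R)"
        using x y by (auto simp: prod_ring_simps PiE_iff ring.ring_simprules[OF rR])
      show "x \<oplus>\<^bsub>prod_ring Idx R\<^esub> y = y \<oplus>\<^bsub>prod_ring Idx R\<^esub> x"
        using x y by (auto simp: prod_ring_simps fun_eq_iff PiE_iff ring.ring_simprules[OF rR])
    next
      show "\<zero>\<^bsub>prod_ring Idx R\<^esub> \<in> carrier (prod_ring Idx R)"
        by (auto simp: prod_ring_simps PiE_iff ring.ring_simprules[OF rR])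
    next
      fix x assume x: "x \<in> carrier (prod_ring Idx R)"
      show "\<zero>\<^bsub>prod_ring Idx R\<^esub> \<oplus>\<^bsub>prod_ring Idx R\<^esub> x = x"
        using x by (auto simp: prod_ring_simps fun_eq_iff PiE_iff extensional_def ring.ring_simprules[OF rR])
      show "\<exists>y\<in>carrier (prod_ring Idx R). y \<oplus>\<^bsub>prod_ring Idx R\<^esub> x = \<zero>\<^bsub>prod_ring Idx R\<^esub>"
        using x by (intro bexI[of _ "restrict (\<lambda>i. \<ominus>\<^bsub>R i\<^esub> x i) Idx"])
          (auto simp: prod_ring_simps fun_eq_iff PiE_iff ring.ring_simprules[OF rR])
    qed
  next
    show "comm_monoid (prod_ring Idx R)"
    proof (rule comm_monoidI)
      fix x y z
      assume x: "x \<in> carrier (prod_ring Idx R)" and y: "y \<in> carrier (prod_ring Idx R)"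
        and z: "z \<in> carrier (prod_ring Idx R)"
      show "(x \<otimes>\<^bsub>prod_ring Idx R\<^esub> y) \<otimes>\<^bsub>prod_ring Idx R\<^esub> z = x \<otimes>\<^bsub>prod_ring Idx R\<^esub> (y \<otimes>\<^bsub>prod_ring Idx R\<^esub> z)"
        using x y z by (auto simp: prod_ring_simps fun_eq_iff PiE_iff ring.ring_simprules[OF rR])
    next
      fix x y
      assume x: "x \<in> carrier (prod_ring Idx R)" and y: "y \<in> carrier (prod_ring Idx R)"
      show "x \<otimes>\<^bsub>prod_ring Idx R\<^esub> y \<in> carrier (prod_ring Idx R)"
        using x y by (auto simp: prod_ring_simps PiE_iff ring.ring_simprules[OF rR])
      show "x \<otimes>\<^bsub>prod_ring Idx R\<^esub> y = y \<otimes>\<^bsub>prod_ring Idx R\<^esub> x"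
        using x y by (auto simp: prod_ring_simps fun_eq_iff PiE_iff comm_monoid.m_comm[OF cring.axioms(2)[OF crR]])
    next
      show "\<one>\<^bsub>prod_ring Idx R\<^esub> \<in> carrier (prod_ring Idx R)"
        by (auto simp: prod_ring_simps PiE_iff ring.ring_simprules[OF rR])
    next
      fix x assume x: "x \<in> carrier (prod_ring Idx R)"
      show "\<one>\<^bsub>prod_ring Idx R\<^esub> \<otimes>\<^bsub>prod_ring Idx R\<^esub> x = x"
        using x by (auto simp: prod_ring_simps fun_eq_iff PiE_iff extensional_def ring.ring_simprules[OF rR])
    qed
  next
    fix x y z
    assume x: "x \<in> carrier (prod_ring Idx R)" and y: "y \<in> carrier (prod_ring Idx R)"
      and z: "z \<in> carrier (prod_ring Idx R)"
    show "(x \<oplus>\<^bsub>prod_ring Idx R\<^esub> y) \<otimes>\<^bsub>prod_ring Idx R\<^esub> z = x \<otimes>\<^bsub>prod_ring Idx R\<^esub> z \<oplus>\<^bsub>prod_ring Idx R\<^esub> y \<otimes>\<^bsub>prod_ring Idx R\<^esub> z"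
      using x y z by (auto simp: prod_ring_simps fun_eq_iff PiE_iff ring.ring_simprules[OF rR])
  qed
qed


lemma (in ring) idealI':
  assumes "I \<subseteq> carrier R" "\<zero> \<in> I" "\<And>a b. a \<in> I \<Longrightarrow> b \<in> I \<Longrightarrow> a \<oplus> b \<in> I"
    "\<And>a x. a \<in> I \<Longrightarrow> x \<in> carrier R \<Longrightarrow> x \<otimes> a \<in> I"
    "\<And>a x. a \<in> I \<Longrightarrow> x \<in> carrier R \<Longrightarrow> a \<otimes> x \<in> I"
  shows "ideal I R"
proof (rule idealI[OF ring_axioms])
  show "subgroup I (add_monoid R)"
  proof (rule add.subgroupI)
    show "I \<subseteq> carrier R" using assms(1) by simp
    show "I \<noteq> {}" using assms(2) by blast
    fix a assume a: "a \<in> I"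
    have ac: "a \<in> carrier R" using a assms(1) by blast
    have "\<ominus> \<one> \<otimes> a = \<ominus> a" using ac by (simp add: l_minus)
    then have "\<ominus> a \<in> I" using assms(4)[OF a, of "\<ominus> \<one>"] by simp
    then show "\<ominus> a \<in> I" .
  next
    fix a b assume "a \<in> I" "b \<in> I"
    then show "a \<oplus> b \<in> I" using assms(3) by simp
  qed
qed (use assms in blast)+

locale prodctx =
  fixes Idx :: "'i set" and R :: "'i \<Rightarrow> ('a, 'b) ring_scheme"
  assumes cr: "\<And>i. i \<in> Idx \<Longrightarrow> cring (R i)"
begin

abbreviation P where "P \<equiv> prod_ring Idx R"

sublocale P: cring P by (rule prod_cring[OF cr])

lemma rR: "i \<in> Idx \<Longrightarrow> ring (R i)" using cr cring.axioms(1) by blast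

definition e :: "'i set \<Rightarrow> 'i \<Rightarrow> 'a" where
  "e F = restrict (\<lambda>i. if i \<in> F then \<one>\<^bsub>R i\<^esub> else \<zero>\<^bsub>R i\<^esub>) Idx"

definition pr :: "'i set \<Rightarrow> ('i \<Rightarrow> 'a) \<Rightarrow> ('i \<Rightarrow> 'a)" where
  "pr F x = restrict (\<lambda>i. if i \<in> F then x i else \<zero>\<^bsub>R i\<^esub>) Idx"

lemma e_carr: "e F \<in> carrier P"
  by (auto simp: e_def prod_ring_simps ring.ring_simprules[OF rR])

lemma pr_eq: "x \<in> carrier P \<Longrightarrow> pr F x = e F \<otimes>\<^bsub>P\<^esub> x"
  by (auto simp: e_def pr_def prod_ring_simps fun_eq_iff PiE_iff ring.ring_simprules[OF rR])

lemma pr_carr: "x \<in> carrier P \<Longrightarrow> pr F x \<in> carrier P"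
  by (simp add: pr_eq e_carr)

lemma pr_ideal: "ideal K P \<Longrightarrow> x \<in> K \<Longrightarrow> pr F x \<in> K"
  by (metis e_carr ideal.I_l_closed ideal.Icarr pr_eq)

lemma pr_add: "x \<in> carrier P \<Longrightarrow> y \<in> carrier P \<Longrightarrow> pr F (x \<oplus>\<^bsub>P\<^esub> y) = pr F x \<oplus>\<^bsub>P\<^esub> pr F y"
  by (simp add: pr_eq e_carr P.r_distr)

lemma pr_minus: "x \<in> carrier P \<Longrightarrow> y \<in> carrier P \<Longrightarrow> pr F (x \<ominus>\<^bsub>P\<^esub> y) = pr F x \<ominus>\<^bsub>P\<^esub> pr F y"
  by (simp add: pr_eq e_carr P.r_distr a_minus_def P.r_minus)

lemma pr_split: "x \<in> carrier P \<Longrightarrow> pr F x \<oplus>\<^bsub>P\<^esub> pr (-F) x = x"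
  by (auto simp: pr_def prod_ring_simps fun_eq_iff PiE_iff extensional_def ring.ring_simprules[OF rR])

lemma pr_pr: "x \<in> carrier P \<Longrightarrow> pr F (pr G x) = pr (F \<inter> G) x"
  by (auto simp: pr_def fun_eq_iff)

lemma pr_empty: "pr {} x = \<zero>\<^bsub>P\<^esub>"
  by (auto simp: pr_def prod_ring_simps)

lemma pr_UNIV: "x \<in> carrier P \<Longrightarrow> pr UNIV x = x"
  by (auto simp: pr_def prod_ring_simps fun_eq_iff PiE_iff extensional_def)

lemma pr_union: "x \<in> carrier P \<Longrightarrow> F \<inter> G = {} \<Longrightarrow> pr (F \<union> G) x = pr F x \<oplus>\<^bsub>P\<^esub> pr G x"
  by (auto simp: pr_def prod_ring_simps fun_eq_iff PiE_iff ring.ring_simprules[OF rR])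

lemma pr_outside: "i \<notin> Idx \<Longrightarrow> pr (insert i F) x = pr F x"
  by (auto simp: pr_def fun_eq_iff)

abbreviation D where "D \<equiv> direct_sum_ideal Idx R"

lemma D_ideal: "ideal D P"
proof (rule P.idealI')
  show "D \<subseteq> carrier P" by (auto simp: direct_sum_ideal_def)
  show "\<zero>\<^bsub>P\<^esub> \<in> D" by (auto simp: direct_sum_ideal_def prod_ring_simps ring.ring_simprules[OF rR])
next
  fix a b assume a: "a \<in> D" and b: "b \<in> D"
  have "{i \<in> Idx. (a \<oplus>\<^bsub>P\<^esub> b) i \<noteq> \<zero>\<^bsub>R i\<^esub>} \<subseteq> {i \<in> Idx. a i \<noteq> \<zero>\<^bsub>R i\<^esub>} \<union> {i \<in> Idx. b i \<noteq> \<zero>\<^bsub>R i\<^esub>}"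
    using a b by (auto simp: direct_sum_ideal_def prod_ring_simps PiE_iff ring.ring_simprules[OF rR])
  then show "a \<oplus>\<^bsub>P\<^esub> b \<in> D" using a b
    by (auto simp: direct_sum_ideal_def intro: finite_subset)
next
  fix a x assume a: "a \<in> D" and x: "x \<in> carrier P"
  have "{i \<in> Idx. (x \<otimes>\<^bsub>P\<^esub> a) i \<noteq> \<zero>\<^bsub>R i\<^esub>} \<subseteq> {i \<in> Idx. a i \<noteq> \<zero>\<^bsub>R i\<^esub>}"
    using a x by (auto simp: direct_sum_ideal_def prod_ring_simps PiE_iff ring.ring_simprules[OF rR])
  then show "x \<otimes>\<^bsub>P\<^esub> a \<in> D" using a x
    by (auto simp: direct_sum_ideal_def intro: finite_subset)
  then show "a \<otimes>\<^bsub>P\<^esub> x \<in> D" using a x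
    by (simp add: P.m_comm direct_sum_ideal_def)
qed

lemma pr_finite_D: "finite F \<Longrightarrow> x \<in> carrier P \<Longrightarrow> pr F x \<in> D"
  using pr_carr[of x F] by (auto simp: direct_sum_ideal_def pr_def intro: finite_subset[of _ F])

lemma D_pr: "y \<in> D \<Longrightarrow> pr {i \<in> Idx. y i \<noteq> \<zero>\<^bsub>R i\<^esub>} y = y"
  by (auto simp: direct_sum_ideal_def pr_def fun_eq_iff prod_ring_simps PiE_iff extensional_def)

end


context prodctx begin

lemma coord_ideal:
  assumes i: "i \<in> Idx" and J: "ideal J P"
  shows "ideal ((\<lambda>j. j i) ` J) (R i)"
proof (rule ring.idealI'[OF rR[OF i]])
  have Jc: "J \<subseteq> carrier P" using J by (simp add: ideal.Icarr subsetI)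
  show "(\<lambda>j. j i) ` J \<subseteq> carrier (R i)" using Jc i by (auto simp: prod_ring_simps PiE_iff)
  have "\<zero>\<^bsub>P\<^esub> \<in> J" using J by (simp add: additive_subgroup.zero_closed ideal.axioms(1))
  moreover have "\<zero>\<^bsub>P\<^esub> i = \<zero>\<^bsub>R i\<^esub>" using i by (simp add: prod_ring_simps)
  ultimately show "\<zero>\<^bsub>R i\<^esub> \<in> (\<lambda>j. j i) ` J" by (metis image_eqI)
next
  fix a b assume "a \<in> (\<lambda>j. j i) ` J" "b \<in> (\<lambda>j. j i) ` J"
  then obtain ja jb where ja: "ja \<in> J" "a = ja i" and jb: "jb \<in> J" "b = jb i" by blast
  have "ja \<oplus>\<^bsub>P\<^esub> jb \<in> J" using J ja jb by (simp add: additive_subgroup.a_closed ideal.axioms(1))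
  moreover have "(ja \<oplus>\<^bsub>P\<^esub> jb) i = a \<oplus>\<^bsub>R i\<^esub> b" using i ja jb by (simp add: prod_ring_simps)
  ultimately show "a \<oplus>\<^bsub>R i\<^esub> b \<in> (\<lambda>j. j i) ` J" by (metis image_eqI)
next
  fix a x assume "a \<in> (\<lambda>j. j i) ` J" and x: "x \<in> carrier (R i)"
  then obtain ja where ja: "ja \<in> J" "a = ja i" by blast
  define eps where "eps = restrict (\<lambda>k. if k = i then x else \<zero>\<^bsub>R k\<^esub>) Idx"
  have epsc: "eps \<in> carrier P" using x by (auto simp: eps_def prod_ring_simps ring.ring_simprules[OF rR])
  have "eps \<otimes>\<^bsub>P\<^esub> ja \<in> J" using J ja epsc by (simp add: ideal.I_l_closed)
  moreover have "(eps \<otimes>\<^bsub>P\<^esub> ja) i = x \<otimes>\<^bsub>R i\<^esub> a" using i ja by (simp add: prod_ring_simps eps_def)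
  ultimately show "x \<otimes>\<^bsub>R i\<^esub> a \<in> (\<lambda>j. j i) ` J" by (metis image_eqI)
  have "ja \<otimes>\<^bsub>P\<^esub> eps \<in> J" using J ja epsc by (simp add: ideal.I_r_closed)
  moreover have "(ja \<otimes>\<^bsub>P\<^esub> eps) i = a \<otimes>\<^bsub>R i\<^esub> x" using i ja by (simp add: prod_ring_simps eps_def)
  ultimately show "a \<otimes>\<^bsub>R i\<^esub> x \<in> (\<lambda>j. j i) ` J" by (metis image_eqI)
qed

lemma single_coord:
  assumes i: "i \<in> Idx" and av: "avoidance_ring (R i)" and J: "ideal J P"
    and S: "finite S" "\<forall>K\<in>S. ideal K P" and cov: "pr {i} ` J \<subseteq> \<Union>S"
  shows "\<exists>K\<in>S. pr {i} ` J \<subseteq> K"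
proof -
  define c where "c = (\<lambda>K. (\<lambda>j::'i\<Rightarrow>'a. j i) ` K)"
  have ha: "has_avoidance (R i) (c J)" using av coord_ideal[OF i J] unfolding avoidance_ring_def c_def by blast
  have f: "finite (c ` S)" using S(1) by (rule finite_imageI)
  have idl: "\<forall>K\<in>c ` S. ideal K (R i)"
  proof
    fix K assume "K \<in> c ` S"
    then obtain K0 where "K0 \<in> S" "K = c K0" by blast
    then show "ideal K (R i)" using S(2) coord_ideal[OF i] unfolding c_def by simp
  qed
  have sub: "c J \<subseteq> \<Union>(c ` S)"
  proof
    fix a assume "a \<in> c J"
    then obtain j where j: "j \<in> J" "a = j i" unfolding c_def by blast
    then obtain K where K: "K \<in> S" "pr {i} j \<in> K" using cov by blast
    have "pr {i} j i = a" using i j by (simp add: pr_def)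
    then have "a \<in> c K" unfolding c_def using K(2) by (metis image_eqI)
    then show "a \<in> \<Union>(c ` S)" using K(1) by blast
  qed
  obtain K where K: "K \<in> S" "c J \<subseteq> c K"
    using ha f idl sub unfolding has_avoidance_def
    by (metis (no_types, lifting) imageE)
  have "pr {i} ` J \<subseteq> K"
  proof
    fix y assume "y \<in> pr {i} ` J"
    then obtain j where j: "j \<in> J" "y = pr {i} j" by blast
    have "j i \<in> c K" using K(2) j(1) unfolding c_def by blast
    then obtain k where k: "k \<in> K" "j i = k i" unfolding c_def by blast
    have "pr {i} j = pr {i} k" using k by (auto simp: pr_def fun_eq_iff)
    moreover have "ideal K P" using S(2) K(1) by blast
    ultimately show "y \<in> K" using j k pr_ideal by metis
  qed
  then show ?thesis using K by blast
qed

lemma mix: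
  assumes J: "ideal J P" and j: "j \<in> J" "j' \<in> J" and AB: "A \<inter> B = {}"
    and S: "\<forall>K\<in>S. ideal K P" and cov: "pr (A \<union> B) ` J \<subseteq> \<Union>S"
  shows "\<exists>K\<in>S. pr A j \<in> K \<and> pr B j' \<in> K"
proof -
  have Jc: "J \<subseteq> carrier P" using J by (simp add: ideal.Icarr subsetI)
  have jc: "j \<in> carrier P" "j' \<in> carrier P" using j Jc by auto
  define z where "z = pr A j \<oplus>\<^bsub>P\<^esub> pr B j'"
  have zJ: "z \<in> J" unfolding z_def using J j pr_ideal[OF J]
    by (simp add: additive_subgroup.a_closed ideal.axioms(1))
  have e1: "(A \<union> B) \<inter> A = A" "(A \<union> B) \<inter> B = B" "A \<inter> A = A" "B \<inter> B = B" "B \<inter> A = {}"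
    using AB by blast+
  have "pr (A \<union> B) z = z"
    unfolding z_def using jc by (simp add: pr_add pr_carr pr_pr e1)
  then have "z \<in> pr (A \<union> B) ` J" using zJ by (metis image_eqI)
  then obtain K where K: "K \<in> S" "z \<in> K" using cov by blast
  have IK: "ideal K P" using S K by blast
  have "pr A z = pr A j" unfolding z_def using jc AB
    by (simp add: pr_add pr_carr pr_pr pr_empty e1)
  moreover have "pr B z = pr B j'" unfolding z_def using jc AB
    by (simp add: pr_add pr_carr pr_pr pr_empty e1)
  ultimately show ?thesis using K pr_ideal[OF IK] by metis
qed

definition good :: "('i \<Rightarrow> 'a) set \<Rightarrow> 'i set \<Rightarrow> bool" where
  "good J A \<longleftrightarrow> (\<forall>S. finite S \<longrightarrow> (\<forall>K\<in>S. ideal K P) \<longrightarrow> pr A ` J \<subseteq> \<Union>S \<longrightarrow> (\<exists>K\<in>S. pr A ` J \<subseteq> K))"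

lemma ideal_add: "ideal K P \<Longrightarrow> a \<in> K \<Longrightarrow> b \<in> K \<Longrightarrow> a \<oplus>\<^bsub>P\<^esub> b \<in> K"
  by (simp add: additive_subgroup.a_closed ideal.axioms(1))

lemma ideal_minus: "ideal K P \<Longrightarrow> a \<in> K \<Longrightarrow> b \<in> K \<Longrightarrow> a \<ominus>\<^bsub>P\<^esub> b \<in> K"
  by (simp add: a_minus_def additive_subgroup.a_closed additive_subgroup.a_inv_closed ideal.axioms(1))

lemma two_factor:
  assumes J: "ideal J P" and gA: "good J A" and gB: "good J B" and AB: "A \<inter> B = {}"
  shows "good J (A \<union> B)"
  unfolding good_def
proof (intro allI impI)
  fix S assume Sf: "finite S" and Si: "\<forall>K\<in>S. ideal K P" and cov: "pr (A \<union> B) ` J \<subseteq> \<Union>S"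
  define T' where "T' = {K\<in>S. pr B ` J \<subseteq> K}"
  have "pr A ` J \<subseteq> \<Union>T'"
  proof
    fix y assume "y \<in> pr A ` J"
    then obtain j where j: "j \<in> J" "y = pr A j" by blast
    define Sj where "Sj = {K\<in>S. pr A j \<in> K}"
    have "pr B ` J \<subseteq> \<Union>Sj"
    proof
      fix y' assume "y' \<in> pr B ` J"
      then obtain j' where j': "j' \<in> J" "y' = pr B j'" by blast
      from mix[OF J j(1) j'(1) AB Si cov] obtain K where "K \<in> S" "pr A j \<in> K" "pr B j' \<in> K" by blast
      then show "y' \<in> \<Union>Sj" unfolding Sj_def using j' by blast
    qed
    moreover have "finite Sj" unfolding Sj_def using Sf by simp
    moreover have "\<forall>K\<in>Sj. ideal K P" unfolding Sj_def using Si by blast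
    ultimately obtain K where "K \<in> Sj" "pr B ` J \<subseteq> K" using gB unfolding good_def by blast
    then show "y \<in> \<Union>T'" unfolding T'_def Sj_def using j by blast
  qed
  moreover have "finite T'" unfolding T'_def using Sf by simp
  moreover have "\<forall>K\<in>T'. ideal K P" unfolding T'_def using Si by blast
  ultimately obtain K where K: "K \<in> T'" "pr A ` J \<subseteq> K" using gA unfolding good_def by blast
  have IK: "ideal K P" using K Si unfolding T'_def by blast
  have "pr (A \<union> B) ` J \<subseteq> K"
  proof
    fix x assume "x \<in> pr (A \<union> B) ` J"
    then obtain j where j: "j \<in> J" "x = pr (A \<union> B) j" by blast
    have jc: "j \<in> carrier P" using j J by (simp add: ideal.Icarr)
    have "x = pr A j \<oplus>\<^bsub>P\<^esub> pr B j" using j jc AB by (simp add: pr_union)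
    moreover have "pr A j \<in> K" "pr B j \<in> K" using K j unfolding T'_def by blast+
    ultimately show "x \<in> K" using ideal_add[OF IK] by simp
  qed
  then show "\<exists>K\<in>S. pr (A \<union> B) ` J \<subseteq> K" using K unfolding T'_def by blast
qed

lemma lemmaA:
  assumes F: "finite F" and av: "\<And>i. i \<in> Idx \<Longrightarrow> avoidance_ring (R i)" and J: "ideal J P"
  shows "good J F"
  using F
proof (induction F rule: finite_induct)
  case empty
  show ?case unfolding good_def
  proof (intro allI impI)
    fix S assume "finite S" "\<forall>K\<in>S. ideal K P" and cov: "pr {} ` J \<subseteq> \<Union>S"
    have z: "\<zero>\<^bsub>P\<^esub> \<in> J" using J by (simp add: additive_subgroup.zero_closed ideal.axioms(1))
    have "\<zero>\<^bsub>P\<^esub> \<in> \<Union>S" using cov z pr_empty by (metis image_eqI subsetD)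
    then obtain K where K: "K \<in> S" "\<zero>\<^bsub>P\<^esub> \<in> K" by blast
    have "pr {} ` J \<subseteq> K" using K(2) by (auto simp: pr_empty)
    then show "\<exists>K\<in>S. pr {} ` J \<subseteq> K" using K(1) by blast
  qed
next
  case (insert i F)
  show ?case
  proof (cases "i \<in> Idx")
    case True
    have gi: "good J {i}" unfolding good_def
      using single_coord[OF True av[OF True] J] by blast
    have "good J ({i} \<union> F)" using two_factor[OF J gi insert(3)] insert(2) by simp
    then show ?thesis by simp
  next
    case False
    then show ?thesis using insert(3) unfolding good_def by (simp add: pr_outside)
  qed
qed

end

lemma (in ring) add_minus_cancel: "x \<in> carrier R \<Longrightarrow> y \<in> carrier R \<Longrightarrow> x \<oplus> y \<ominus> y = x"
  by (simp add: a_minus_def a_assoc r_neg)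

lemma (in ring) minus_add_cancel: "x \<in> carrier R \<Longrightarrow> y \<in> carrier R \<Longrightarrow> x \<ominus> y \<oplus> y = x"
  by (simp add: a_minus_def a_assoc l_neg)

lemma quot_avoidance:
  fixes A (structure)
  assumes rA: "ring A" and I: "ideal I A" and av: "avoidance_ring A"
  shows "avoidance_ring (A Quot I)"
  unfolding avoidance_ring_def has_avoidance_def
proof (intro allI impI)
  fix J' S' assume J': "ideal J' (A Quot I)" and Sf: "finite S'" and Si: "\<forall>K\<in>S'. ideal K (A Quot I)"
    and cov: "J' \<subseteq> \<Union>S'"
  interpret A: ring A by (rule rA)
  have J'c: "J' \<subseteq> carrier (A Quot I)" using J' by (simp add: ideal.Icarr subsetI)
  have "ideal (\<Union>J') A" using A.quot_ideal_imp_ring_ideal[OF I J'] .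
  then have ha: "has_avoidance A (\<Union>J')" using av unfolding avoidance_ring_def by blast
  have "\<Union>J' \<subseteq> \<Union>(Union ` S')"
  proof
    fix x assume x: "x \<in> \<Union>J'"
    have xc: "x \<in> carrier A" using A.canonical_proj_vimage_in_carrier[OF I J'c] x by blast
    have "I +> x \<in> J'" using A.canonical_proj_vimage_mem_iff[OF I J'c xc] x by blast
    then obtain K where K: "K \<in> S'" "I +> x \<in> K" using cov by blast
    have Kc: "K \<subseteq> carrier (A Quot I)" using Si K(1) by (meson ideal.Icarr subsetI)
    have "x \<in> \<Union>K" using A.canonical_proj_vimage_mem_iff[OF I Kc xc] K(2) by blast
    then show "x \<in> \<Union>(Union ` S')" using K(1) by blast
  qed
  moreover have "finite (Union ` S')" using Sf by simp
  moreover have "\<forall>K\<in>Union ` S'. ideal K A" using Si A.quot_ideal_imp_ring_ideal[OF I] by blast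
  ultimately obtain K where K: "K \<in> S'" "\<Union>J' \<subseteq> \<Union>K"
    using ha unfolding has_avoidance_def by (metis (no_types, lifting) imageE)
  have Kc: "K \<subseteq> carrier (A Quot I)" using Si K(1) by (meson ideal.Icarr subsetI)
  have "J' \<subseteq> K"
  proof
    fix X assume X: "X \<in> J'"
    then obtain r where r: "r \<in> carrier A" "X = I +> r"
      using J'c unfolding FactRing_def A_RCOSETS_def'[of A I] by auto
    have "r \<in> \<Union>J'" using A.canonical_proj_vimage_mem_iff[OF I J'c r(1)] X r(2) by blast
    then have "r \<in> \<Union>K" using K(2) by blast
    then show "X \<in> K" using A.canonical_proj_vimage_mem_iff[OF I Kc r(1)] r(2) by blast
  qed
  then show "\<exists>K\<in>S'. J' \<subseteq> K" using K(1) by blast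
qed

context prodctx begin

lemma cos_eq_imp:
  assumes x: "x \<in> carrier P" and y: "y \<in> carrier P" and eq: "D +>\<^bsub>P\<^esub> x = D +>\<^bsub>P\<^esub> y"
  shows "x \<ominus>\<^bsub>P\<^esub> y \<in> D"
proof -
  interpret Di: ideal D P by (rule D_ideal)
  have "x \<in> D +>\<^bsub>P\<^esub> y" using Di.a_repr_independenceD[OF x] eq by simp
  then show ?thesis using Di.a_rcos_module_minus[OF P.ring_axioms y x] by simp
qed

lemma imp_cos_eq:
  assumes x: "x \<in> carrier P" and y: "y \<in> carrier P" and d: "x \<ominus>\<^bsub>P\<^esub> y \<in> D"
  shows "D +>\<^bsub>P\<^esub> x = D +>\<^bsub>P\<^esub> y"
proof -
  interpret Di: ideal D P by (rule D_ideal)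
  have "x \<in> D +>\<^bsub>P\<^esub> y" using Di.a_rcos_module_minus[OF P.ring_axioms y x] d by simp
  then show ?thesis using Di.a_repr_independence'[OF _ y] by simp
qed

lemma back_dir:
  assumes av: "\<And>i. i \<in> Idx \<Longrightarrow> avoidance_ring (R i)"
    and avQ: "avoidance_ring (P Quot D)"
  shows "avoidance_ring P"
  unfolding avoidance_ring_def has_avoidance_def
proof (intro allI impI)
  fix J S assume J: "ideal J P" and Sf: "finite S" and Si: "\<forall>K\<in>S. ideal K P" and cov: "J \<subseteq> \<Union>S"
  have Jc: "J \<subseteq> carrier P" using J by (meson ideal.Icarr subsetI)
  have prJ: "pr F ` J \<subseteq> J" for F using pr_ideal[OF J] by blast
  define T where "T F = {K\<in>S. pr F ` J \<subseteq> K}" for F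
  have Tne: "T F \<noteq> {}" if "finite F" for F
  proof -
    have "good J F" by (rule lemmaA[OF that av J])
    moreover have "pr F ` J \<subseteq> \<Union>S" using cov prJ[of F] by blast
    ultimately obtain K where "K \<in> S" "pr F ` J \<subseteq> K" using Sf Si unfolding good_def by (meson bexE)
    then show ?thesis unfolding T_def by blast
  qed
  have Tanti: "T G \<subseteq> T F" if "F \<subseteq> G" for F G
  proof
    fix K assume K: "K \<in> T G"
    have "pr F ` J \<subseteq> K"
    proof
      fix x assume "x \<in> pr F ` J"
      then obtain j where j: "j \<in> J" "x = pr F j" by blast
      have "F \<inter> G = F" using that by blast
      moreover have "j \<in> carrier P" using j Jc by blast
      ultimately have "x = pr F (pr G j)" using j by (simp add: pr_pr)
      moreover have "pr G j \<in> K" using K j unfolding T_def by blast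
      moreover have "ideal K P" using K Si unfolding T_def by blast
      ultimately show "x \<in> K" using pr_ideal by metis
    qed
    then show "K \<in> T F" using K unfolding T_def by blast
  qed
  obtain F0 where F0: "finite F0" and min: "\<And>G. finite G \<Longrightarrow> card (T F0) \<le> card (T G)"
    using ex_has_least_nat[of finite "{}" "\<lambda>F. card (T F)"] by auto
  have Tfin: "finite (T F)" for F unfolding T_def using Sf by simp
  have T0: "T F0 \<subseteq> T F" if "finite F" for F
  proof -
    have "T (F \<union> F0) \<subseteq> T F0" using Tanti by blast
    moreover have "card (T F0) \<le> card (T (F \<union> F0))" using min that F0 by simp
    ultimately have "T (F \<union> F0) = T F0" using Tfin by (meson card_seteq)
    then show ?thesis using Tanti[of F "F \<union> F0"] by blast
  qed
  have claim: "\<exists>K\<in>T F0. pr (-F0) j \<in> K" if j: "j \<in> J" for j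
  proof -
    define Sj where "Sj = {K\<in>S. pr (-F0) j \<in> K}"
    have cov': "pr (- F0 \<union> F0) ` J \<subseteq> \<Union>S"
    proof
      fix y assume "y \<in> pr (- F0 \<union> F0) ` J"
      then obtain j' where j': "j' \<in> J" "y = pr (- F0 \<union> F0) j'" by blast
      moreover have "j' \<in> carrier P" using j' Jc by blast
      ultimately have "y = j'" by (simp add: pr_UNIV)
      then show "y \<in> \<Union>S" using j' cov by blast
    qed
    have "pr F0 ` J \<subseteq> \<Union>Sj"
    proof
      fix y assume "y \<in> pr F0 ` J"
      then obtain j' where j': "j' \<in> J" "y = pr F0 j'" by blast
      from mix[OF J j j'(1) _ Si cov'] obtain K where "K \<in> S" "pr (-F0) j \<in> K" "pr F0 j' \<in> K" by auto
      then show "y \<in> \<Union>Sj" unfolding Sj_def using j' by blast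
    qed
    moreover have "finite Sj" unfolding Sj_def using Sf by simp
    moreover have "\<forall>K\<in>Sj. ideal K P" unfolding Sj_def using Si by blast
    ultimately obtain K where "K \<in> Sj" "pr F0 ` J \<subseteq> K" using lemmaA[OF F0 av J] unfolding good_def by blast
    then show ?thesis unfolding Sj_def T_def by blast
  qed
  interpret Di: ideal D P by (rule D_ideal)
  let ?Q = "P Quot D"
  let ?c = "\<lambda>K. (a_r_coset P D) ` K"
  have hq: "has_avoidance ?Q (?c J)" using avQ P.ring_ideal_imp_quot_ideal[OF D_ideal J]
    unfolding avoidance_ring_def by blast
  have "?c J \<subseteq> \<Union>(?c ` T F0)"
  proof
    fix X assume "X \<in> ?c J"
    then obtain j where j: "j \<in> J" "X = D +>\<^bsub>P\<^esub> j" by blast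
    obtain K where K: "K \<in> T F0" "pr (-F0) j \<in> K" using claim[OF j(1)] by blast
    have jc: "j \<in> carrier P" using j Jc by blast
    have sp: "pr F0 j \<oplus>\<^bsub>P\<^esub> pr (-F0) j = j" using pr_split[OF jc] .
    have "j \<ominus>\<^bsub>P\<^esub> pr (-F0) j = pr F0 j"
    proof -
      have "pr F0 j \<oplus>\<^bsub>P\<^esub> pr (-F0) j \<ominus>\<^bsub>P\<^esub> pr (-F0) j = pr F0 j"
        by (rule P.add_minus_cancel[OF pr_carr[OF jc] pr_carr[OF jc]])
      then show ?thesis using sp by simp
    qed
    then have "j \<ominus>\<^bsub>P\<^esub> pr (-F0) j \<in> D" using pr_finite_D[OF F0 jc] by simp
    then have "X = D +>\<^bsub>P\<^esub> pr (-F0) j" using imp_cos_eq[OF jc pr_carr[OF jc]] j(2) by simp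
    then show "X \<in> \<Union>(?c ` T F0)" using K by blast
  qed
  moreover have "finite (?c ` T F0)" using Tfin by simp
  moreover have "\<forall>K\<in>?c ` T F0. ideal K ?Q"
    using P.ring_ideal_imp_quot_ideal[OF D_ideal] Si unfolding T_def by blast
  ultimately obtain K where K: "K \<in> T F0" "?c J \<subseteq> ?c K"
    using hq unfolding has_avoidance_def by (metis (no_types, lifting) imageE)
  have IK: "ideal K P" using K(1) Si unfolding T_def by blast
  have Kc: "K \<subseteq> carrier P" using IK by (meson ideal.Icarr subsetI)
  have "J \<subseteq> K"
  proof
    fix j assume j: "j \<in> J"
    have jc: "j \<in> carrier P" using j Jc by blast
    have "D +>\<^bsub>P\<^esub> j \<in> ?c K" using K(2) j by blast
    then obtain x where x: "x \<in> K" "D +>\<^bsub>P\<^esub> j = D +>\<^bsub>P\<^esub> x" by blast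
    have xc: "x \<in> carrier P" using x Kc by blast
    define y where "y = j \<ominus>\<^bsub>P\<^esub> x"
    have yD: "y \<in> D" unfolding y_def using cos_eq_imp[OF jc xc x(2)] .
    have yc: "y \<in> carrier P" unfolding y_def using jc xc by simp
    define F where "F = {i \<in> Idx. y i \<noteq> \<zero>\<^bsub>R i\<^esub>}"
    have Ff: "finite F" using yD unfolding F_def direct_sum_ideal_def by blast
    have "y = pr F y" using D_pr[OF yD] unfolding F_def by simp
    also have "\<dots> = pr F j \<ominus>\<^bsub>P\<^esub> pr F x" unfolding y_def using pr_minus[OF jc xc] .
    finally have yeq: "y = pr F j \<ominus>\<^bsub>P\<^esub> pr F x" .
    have "pr F j \<in> K" using T0[OF Ff] K(1) j unfolding T_def by blast
    moreover have "pr F x \<in> K" using pr_ideal[OF IK x(1)] .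
    ultimately have "y \<in> K" using yeq ideal_minus[OF IK] by simp
    then have "y \<oplus>\<^bsub>P\<^esub> x \<in> K" using ideal_add[OF IK] x(1) by simp
    moreover have "y \<oplus>\<^bsub>P\<^esub> x = j" unfolding y_def using P.minus_add_cancel[OF jc xc] .
    ultimately show "j \<in> K" by simp
  qed
  then show "\<exists>K\<in>S. J \<subseteq> K" using K(1) unfolding T_def by blast
qed

end

theorem corollary3p12:
  fixes Idx :: "'i set" and R :: "'i \<Rightarrow> ('a, 'b) ring_scheme"
  assumes "\<And>i. i \<in> Idx \<Longrightarrow> cring (R i)"
    and "\<And>i. i \<in> Idx \<Longrightarrow> \<one>\<^bsub>R i\<^esub> \<noteq> \<zero>\<^bsub>R i\<^esub>"
    and "\<And>i. i \<in> Idx \<Longrightarrow> avoidance_ring (R i)"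
  shows "avoidance_ring (prod_ring Idx R) \<longleftrightarrow>
         avoidance_ring (prod_ring Idx R Quot direct_sum_ideal Idx R)"
proof -
  interpret prodctx Idx R by (rule prodctx.intro[OF assms(1)])
  show ?thesis
    using quot_avoidance[OF P.ring_axioms D_ideal] back_dir[OF assms(3)] by blast
qed

end
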